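(* Let $a\geq 1$ and $b\geq 2$ be integers. Then for Lebesgue-almost every $x\in A$ we have $\lim_{k\to\infty}T_{a,b}^k(x)\neq(0,\ldots,0)$.
   Context: For $n\geq 1$ let $\Lambda^n=\{x\in\mathbb{R}^n : 0\leq x_1\leq\cdots\leq x_n\}$. For integers $a,b\geq 1$ the map $T_{a,b}:\Lambda^{a+b}\to\Lambda^{a+b}$ sends $x$ to the vector obtained by arranging $x_1,\ldots,x_a,\,x_{a+1}-x_a,\ldots,x_{a+b}-x_a$ in nondecreasing order (each coordinate sequence of the orbit is nonincreasing, so the limit exists). $A=\{x\in\Lambda^{a+b}: x_1+\cdots+x_{a+b}\leq b\,x_{a+b}\}$. *)

theory Defs
  imports "HOL-Analysis.Analysis"
begin

text \<open>Points of R^n are represented as extensional functions nat => real on the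
index set {..<n} (0-based: coordinate x_i of the paper is x (i-1)).
Lebesgue measure on R^n is the product measure PiM {..<n} (%_. lborel).\<close>

definition Lambda :: "nat \<Rightarrow> (nat \<Rightarrow> real) set" where
  "Lambda n = {x \<in> PiE {..<n} (\<lambda>_. UNIV).
      0 \<le> x 0 \<and> (\<forall>i. Suc i < n \<longrightarrow> x i \<le> x (Suc i))}"

definition T_list :: "nat \<Rightarrow> nat \<Rightarrow> (nat \<Rightarrow> real) \<Rightarrow> real list" where
  "T_list a b x = map x [0..<a] @ map (\<lambda>i. x i - x (a - 1)) [a..<a+b]"

definition T :: "nat \<Rightarrow> nat \<Rightarrow> (nat \<Rightarrow> real) \<Rightarrow> (nat \<Rightarrow> real)" where
  "T a b x = (\<lambda>i. if i < a + b then sort (T_list a b x) ! i else undefined)"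

definition A_set :: "nat \<Rightarrow> nat \<Rightarrow> (nat \<Rightarrow> real) set" where
  "A_set a b = {x \<in> Lambda (a + b). (\<Sum>i<a+b. x i) \<le> real b * x (a + b - 1)}"

end

theory Submission imports Defs begin

lemma sorted_nth_le_of_count:
  fixes zs :: "real list"
  assumes s: "sorted zs" and i: "i < length (filter (\<lambda>z. z \<le> c) zs)"
  shows "zs ! i \<le> c"
proof (rule ccontr)
  assume "\<not> zs ! i \<le> c"
  hence "{j. j < length zs \<and> zs ! j \<le> c} \<subseteq> {..<i}"
    using s by (auto simp: sorted_iff_nth_mono) (meson leI order.trans sorted_iff_nth_mono s)
  hence "card {j. j < length zs \<and> zs ! j \<le> c} \<le> i"
    by (metis card_lessThan card_mono finite_lessThan)
  thus False using i by (simp add: length_filter_conv_card)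
qed

lemma count_of_sorted_nth_le:
  fixes zs :: "real list"
  assumes s: "sorted zs" and i: "i < length zs" and c: "zs ! i \<le> c"
  shows "i < length (filter (\<lambda>z. z \<le> c) zs)"
proof -
  have "{..i} \<subseteq> {j. j < length zs \<and> zs ! j \<le> c}"
    using s i c by (auto simp: sorted_iff_nth_mono) (meson order.trans)
  hence "card {..i} \<le> card {j. j < length zs \<and> zs ! j \<le> c}"
    by (intro card_mono) auto
  thus ?thesis by (simp add: length_filter_conv_card)
qed

lemma length_filter_sort: "length (filter P (sort xs)) = length (filter P xs)"
  by (metis mset_filter mset_sort size_mset)

lemma length_filter_le_mono:
  fixes xs ys :: "real list"
  assumes l: "length ys = length xs" and le: "\<And>i. i < length xs \<Longrightarrow> ys ! i \<le> xs ! i"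
  shows "length (filter (\<lambda>z. z \<le> c) xs) \<le> length (filter (\<lambda>z. z \<le> c) ys)"
proof -
  have "{j. j < length xs \<and> xs ! j \<le> c} \<subseteq> {j. j < length ys \<and> ys ! j \<le> c}"
    using l le by (auto intro: order.trans)
  thus ?thesis by (simp add: length_filter_conv_card card_mono)
qed

lemma sort_nth_mono:
  fixes xs ys :: "real list"
  assumes l: "length ys = length xs" and le: "\<And>i. i < length xs \<Longrightarrow> ys ! i \<le> xs ! i"
    and i: "i < length xs"
  shows "sort ys ! i \<le> sort xs ! i"
proof -
  let ?c = "sort xs ! i"
  have "i < length (filter (\<lambda>z. z \<le> ?c) (sort xs))"
    by (rule count_of_sorted_nth_le) (use i in auto)
  also have "\<dots> \<le> length (filter (\<lambda>z. z \<le> ?c) ys)"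
    using length_filter_le_mono[OF l le] by (simp add: length_filter_sort)
  finally show ?thesis
    by (intro sorted_nth_le_of_count) (auto simp: length_filter_sort)
qed


lemma Lambda_mono:
  assumes x: "x \<in> Lambda n" and ij: "i \<le> j" and j: "j < n"
  shows "x i \<le> x j"
  using ij j
proof (induction j rule: dec_induct)
  case base then show ?case by simp
next
  case (step k)
  then have "x k \<le> x (Suc k)" using x by (auto simp: Lambda_def)
  with step show ?case by simp
qed

lemma Lambda_nonneg: "x \<in> Lambda n \<Longrightarrow> i < n \<Longrightarrow> 0 \<le> x i"
  using Lambda_mono[of x n 0 i] by (auto simp: Lambda_def)

lemma length_T_list[simp]: "length (T_list a b x) = a + b"
  by (simp add: T_list_def)

lemma T_list_nth: "j < a + b \<Longrightarrow> T_list a b x ! j = (if j < a then x j else x j - x (a - 1))"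
  by (simp add: T_list_def nth_append)

lemma T_list_nonneg:
  assumes "1 \<le> a" "x \<in> Lambda (a+b)" "z \<in> set (T_list a b x)"
  shows "0 \<le> z"
proof -
  from assms(3) obtain j where j: "j < a + b" "z = T_list a b x ! j"
    by (auto simp: in_set_conv_nth)
  show ?thesis
  proof (cases "j < a")
    case True then show ?thesis using j assms Lambda_nonneg by (simp add: T_list_nth)
  next
    case False then show ?thesis using j assms Lambda_mono[of x "a+b" "a-1" j]
      by (simp add: T_list_nth)
  qed
qed

lemma T_Lambda:
  assumes a: "1 \<le> a" and x: "x \<in> Lambda (a+b)"
  shows "T a b x \<in> Lambda (a+b)"
proof -
  let ?l = "sort (T_list a b x)"
  have ext: "T a b x \<in> PiE {..<a+b} (\<lambda>_. UNIV)"
    by (auto simp: T_def PiE_iff extensional_def)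
  have nn: "0 \<le> T a b x 0"
  proof (cases "0 < a + b")
    case True
    then have "?l ! 0 \<in> set (T_list a b x)"
      by (metis length_T_list length_sort nth_mem set_sort)
    then show ?thesis using T_list_nonneg[OF a x] True by (simp add: T_def)
  next
    case False then show ?thesis using a by simp
  qed
  have "sorted ?l" by simp
  then have "\<forall>i. Suc i < a + b \<longrightarrow> T a b x i \<le> T a b x (Suc i)"
    by (auto simp: T_def sorted_iff_nth_mono)
  with ext nn show ?thesis by (simp add: Lambda_def)
qed

lemma T_le:
  assumes a: "1 \<le> a" and x: "x \<in> Lambda (a+b)" and i: "i < a + b"
  shows "T a b x i \<le> x i"
proof -
  have s: "sorted (map x [0..<a+b])"
    using Lambda_mono[OF x] by (auto simp: sorted_iff_nth_mono)
  have "sort (T_list a b x) ! i \<le> sort (map x [0..<a+b]) ! i"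
  proof (rule sort_nth_mono)
    fix j assume "j < length (map x [0..<a+b])"
    then show "T_list a b x ! j \<le> map x [0..<a+b] ! j"
      using Lambda_nonneg[OF x, of "a-1"] a by (auto simp: T_list_nth)
  qed (use i in auto)
  also have "\<dots> = x i" using s i by (simp add: sorted_sort_id)
  finally show ?thesis using i by (simp add: T_def)
qed

lemma T_sum:
  assumes a: "1 \<le> a"
  shows "(\<Sum>i<a+b. T a b x i) = (\<Sum>i<a+b. x i) - real b * x (a - 1)"
proof -
  have "(\<Sum>i<a+b. T a b x i) = (\<Sum>i<a+b. sort (T_list a b x) ! i)"
    by (simp add: T_def)
  also have "\<dots> = sum_list (sort (T_list a b x))"
    by (simp add: sum_list_sum_nth atLeast0LessThan)
  also have "\<dots> = sum_list (T_list a b x)"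
    by (metis mset_sort sum_mset_sum_list)
  also have "\<dots> = (\<Sum>i<a. x i) + (\<Sum>i\<in>{a..<a+b}. x i - x (a - 1))"
    by (simp add: T_list_def sum_set_upt_conv_sum_list_nat[symmetric] atLeast0LessThan)
  also have "\<dots> = (\<Sum>i<a. x i) + (\<Sum>i\<in>{a..<a+b}. x i) - real b * x (a - 1)"
    by (simp add: sum_subtractf)
  also have "(\<Sum>i<a. x i) + (\<Sum>i\<in>{a..<a+b}. x i) = (\<Sum>i<a+b. x i)"
    by (metis atLeast0LessThan le_add1 sum.atLeastLessThan_concat zero_le)
  finally show ?thesis .
qed

lemma T_last:
  assumes a: "1 \<le> a" and b: "1 \<le> b"
  shows "x (a + b - 1) - x (a - 1) \<le> T a b x (a + b - 1)"
proof -
  let ?l = "sort (T_list a b x)"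
  have "x (a + b - 1) - x (a - 1) \<in> set (T_list a b x)"
    using a b by (auto simp: T_list_def)
  then obtain j where j: "j < a + b" "?l ! j = x (a + b - 1) - x (a - 1)"
    by (metis in_set_conv_nth length_T_list length_sort set_sort)
  have "?l ! j \<le> ?l ! (a + b - 1)"
    using j a by (intro sorted_nth_mono) auto
  then show ?thesis using j a by (simp add: T_def)
qed

definition Phi :: "nat \<Rightarrow> nat \<Rightarrow> (nat \<Rightarrow> real) \<Rightarrow> real" where
  "Phi a b x = real b * x (a + b - 1) - (\<Sum>i<a+b. x i)"

lemma Phi_T:
  assumes a: "1 \<le> a" and b: "1 \<le> b"
  shows "Phi a b x \<le> Phi a b (T a b x)"
proof -
  have "real b * (x (a + b - 1) - x (a - 1)) \<le> real b * T a b x (a + b - 1)"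
    using T_last[OF a b] by (intro mult_left_mono) auto
  then show ?thesis unfolding Phi_def T_sum[OF a] by (simp add: algebra_simps)
qed


lemma orbit_limit:
  assumes a: "1 \<le> a" and b: "1 \<le> b" and x: "x \<in> Lambda (a+b)" and p: "0 < Phi a b x"
  shows "\<exists>L. (\<forall>i<a+b. (\<lambda>k. (T a b ^^ k) x i) \<longlonglongrightarrow> L i) \<and> (\<exists>i<a+b. L i \<noteq> 0)"
proof -
  define y where "y k = (T a b ^^ k) x" for k
  have yL: "y k \<in> Lambda (a+b)" for k
    by (induction k) (auto simp: y_def x T_Lambda[OF a])
  have conv: "\<exists>l. (\<lambda>k. y k i) \<longlonglongrightarrow> l" if i: "i < a + b" for i
  proof -
    have "decseq (\<lambda>k. y k i)"
      by (rule decseq_SucI) (simp add: y_def T_le[OF a _ i] yL[unfolded y_def])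
    moreover have "\<forall>k. 0 \<le> y k i" using Lambda_nonneg[OF yL i] by auto
    ultimately show ?thesis by (metis decseq_convergent)
  qed
  then obtain L where L: "\<And>i. i < a + b \<Longrightarrow> (\<lambda>k. y k i) \<longlonglongrightarrow> L i"
    by metis
  have ph: "Phi a b x \<le> Phi a b (y k)" for k
  proof (induction k)
    case (Suc k) then show ?case using Phi_T[OF a b, of "y k"] by (simp add: y_def)
  qed (simp add: y_def)
  have "(\<lambda>k. Phi a b (y k)) \<longlonglongrightarrow> Phi a b L"
    unfolding Phi_def using a b
    by (intro tendsto_intros L) auto
  then have "Phi a b x \<le> Phi a b L"
    by (rule LIMSEQ_le_const) (use ph in auto)
  then have "\<exists>i<a+b. L i \<noteq> 0"
  proof (rule contrapos_pp)
    assume "\<not> (\<exists>i<a+b. L i \<noteq> 0)"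
    then have "\<forall>i<a+b. L i = 0" by auto
    then have "Phi a b L = 0" using a by (simp add: Phi_def)
    then show "\<not> Phi a b x \<le> Phi a b L" using p by simp
  qed
  then show ?thesis using L by (auto simp: y_def)
qed

lemma null_hyper:
  fixes n :: nat
  assumes b: "2 \<le> b" and n: "1 \<le> n"
  shows "{x \<in> space (PiM {..<n} (\<lambda>_. lborel)). real b * x (n - 1) - (\<Sum>i<n. x i) = 0}
     \<in> null_sets (PiM {..<n} (\<lambda>_. lborel))" (is "?N \<in> null_sets ?M")
proof -
  interpret product_sigma_finite "\<lambda>_::nat. lborel :: real measure"
    by standard
  have ins: "{..<n} = insert (n - 1) {..<n - 1}" using n by (cases n) (auto simp: lessThan_Suc)
  have fm: "(\<lambda>x. real b * x (n - 1) - (\<Sum>i<n. x i)) \<in> borel_measurable ?M"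
    using n by (intro borel_measurable_diff borel_measurable_times borel_measurable_sum
        measurable_component_singleton borel_measurable_const) auto
  have "?N = (\<lambda>x. real b * x (n - 1) - (\<Sum>i<n. x i)) -` {0} \<inter> space ?M" by auto
  then have Nm: "?N \<in> sets ?M" using measurable_sets[OF fm, of "{0}"] by simp
  have inner: "(\<integral>\<^sup>+ y. indicator ?N (z(n - 1 := y)) \<partial>lborel) = 0" for z :: "nat \<Rightarrow> real"
  proof -
    define c where "c = (\<Sum>i<n - 1. z i)"
    have "AE y in lborel. y \<noteq> c / (real b - 1)" by (rule AE_lborel_singleton)
    then have "AE y in lborel. indicator ?N (z(n - 1 := y)) = (0::ennreal)"
    proof (rule AE_mp, intro AE_I2 impI)
      fix y :: real assume ne: "y \<noteq> c / (real b - 1)"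
      have "(\<Sum>i<n. (z(n - 1 := y)) i) = c + y"
        unfolding ins c_def by (simp add: sum.insert)
      then have "real b * (z(n - 1 := y)) (n - 1) - (\<Sum>i<n. (z(n - 1 := y)) i) \<noteq> 0"
        using ne b by (auto simp: field_simps)
      then show "indicator ?N (z(n - 1 := y)) = (0::ennreal)"
        by (simp add: indicator_def)
    qed
    then show ?thesis by (subst nn_integral_cong_AE[where v="\<lambda>_. 0"]) auto
  qed
  have "emeasure ?M ?N = (\<integral>\<^sup>+ x. indicator ?N x \<partial>?M)"
    using Nm by simp
  also have "\<dots> = (\<integral>\<^sup>+ x. (\<integral>\<^sup>+ y. indicator ?N (x(n - 1 := y)) \<partial>lborel) \<partial>PiM {..<n - 1} (\<lambda>_. lborel))"
    unfolding ins by (rule product_nn_integral_insert) (use Nm ins in auto)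
  also have "\<dots> = 0" by (simp only: inner) simp
  finally show ?thesis using Nm by auto
qed

theorem lemma4p5:
  fixes a b :: nat
  assumes "a \<ge> 1" and "b \<ge> 2"
  shows "AE x in PiM {..<a+b} (\<lambda>_. lborel).
           x \<in> A_set a b \<longrightarrow>
           (\<exists>L. (\<forall>i<a+b. (\<lambda>k. (T a b ^^ k) x i) \<longlonglongrightarrow> L i) \<and>
                (\<exists>i<a+b. L i \<noteq> 0))"
proof (rule AE_I')
  show "{x \<in> space (PiM {..<a+b} (\<lambda>_. lborel)). real b * x (a + b - 1) - (\<Sum>i<a+b. x i) = 0}
     \<in> null_sets (PiM {..<a+b} (\<lambda>_. lborel))"
    using null_hyper[of b "a+b"] assms by simp
next
  show "{x \<in> space (PiM {..<a+b} (\<lambda>_. lborel)). \<not> (x \<in> A_set a b \<longrightarrow>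
           (\<exists>L. (\<forall>i<a+b. (\<lambda>k. (T a b ^^ k) x i) \<longlonglongrightarrow> L i) \<and> (\<exists>i<a+b. L i \<noteq> 0)))}
    \<subseteq> {x \<in> space (PiM {..<a+b} (\<lambda>_. lborel)). real b * x (a + b - 1) - (\<Sum>i<a+b. x i) = 0}"
  proof safe
    fix x assume xA: "x \<in> A_set a b"
      and nc: "\<not> (\<exists>L. (\<forall>i<a+b. (\<lambda>k. (T a b ^^ k) x i) \<longlonglongrightarrow> L i) \<and> (\<exists>i<a+b. L i \<noteq> 0))"
    have xL: "x \<in> Lambda (a+b)" and ge: "0 \<le> Phi a b x"
      using xA by (auto simp: A_set_def Phi_def)
    have "\<not> 0 < Phi a b x" using orbit_limit[OF assms(1) _ xL] assms nc by auto
    with ge show "real b * x (a + b - 1) - (\<Sum>i<a+b. x i) = 0" by (simp add: Phi_def)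
  qed
qed

end
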